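(* For all $M,N\in\Lambda_\bot^{001}$, if $M\longrightarrow_{\beta\bot}^\infty N$ then $\mathcal T(M)\mathrel{\widetilde{\longrightarrow}_r^*}\mathcal T(N)$.
   Context: $\Lambda_\bot^{001}=\nu Y.\mu X.(\mathcal V+\lambda\mathcal V.X+(X)Y+\bot)$: possibly infinite trees built from variables, a constant $\bot$, abstractions and applications $(M)N$, whose infinite branches all enter infinitely often the argument position $N$ of an application, up to α-equivalence. $\longrightarrow_\beta$, $\longrightarrow_\beta^*$ are one-step β-reduction (contextual closure of $(\lambda x.M)N\to M[N/x]$) and its reflexive-transitive closure; $\longrightarrow_\beta^\infty$ is defined by the rules (var) $M\longrightarrow_\beta^* x\Rightarrow M\longrightarrow_\beta^\infty x$, (λ) $M\longrightarrow_\beta^*\lambda x.P$, $P\longrightarrow_\beta^\infty P'\Rightarrow M\longrightarrow_\beta^\infty\lambda x.P'$, (@) $M\longrightarrow_\beta^*(P)Q$, $P\longrightarrow_\beta^\infty P'$, $Q\longrightarrow_\beta^\infty Q'\Rightarrow M\longrightarrow_\beta^\infty(P')Q'$, with possibly infinite derivations in which every infinite branch crosses infinitely often the third premise of (@) (and similarly with $\bot$ as a leaf: $M\longrightarrow_\beta^*\bot\Rightarrow M\longrightarrow_\beta^\infty\bot$). A term $M$ is solvable if there are $x_1,\dots,x_m$ and $N_1,\dots,N_n$ with $(\dots((\lambda x_1\dots\lambda x_m.M)N_1)\dots)N_n\longrightarrow_\beta^\infty\lambda x.x$, unsolvable otherwise. The relation $\bot_0$ consists of the pairs $(M,\bot)$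 with $M$ unsolvable, $(\lambda x.\bot,\bot)$, and $((\bot)M,\bot)$. $\longrightarrow_{\beta\bot}$ is the contextual closure of β-contraction together with $\bot_0$, $\longrightarrow_{\beta\bot}^*$ its reflexive-transitive closure, and $\longrightarrow_{\beta\bot}^\infty$ is defined by the same rules as $\longrightarrow_\beta^\infty$ with $\longrightarrow_{\beta\bot}^*$ in place of $\longrightarrow_\beta^*$, plus the rule: $M\longrightarrow_{\beta\bot}^*\bot\Rightarrow M\longrightarrow_{\beta\bot}^\infty\bot$. Resource terms: $s::=x\mid\lambda x.s\mid\langle s\rangle\bar t$, $\bar t$ a finite multiset; finite sums are finite sets; resource reduction $\longmapsto_r$ is generated by $\langle\lambda x.s\rangle\bar t\longmapsto_r s\langle\bar t/x\rangle$ (linear substitution summed over all bijections between the elements of $\bar t$ and the free occurrences of $x$ in $s$, $0$ if their numbers differ) closed under contexts; on finite sums, $\sum_{i=0}^n s_i\longrightarrow_r\sum_{i=0}^n T_i$ when $s_0\longmapsto_r T_0$ and each other $s_i$ either reduces to $T_i$ or equals it; $\longrightarrow_r^*$ is the reflexive-transitive closure. For sets $\mathcal S,\mathcal S'$, $\mathcal S\mathrel{\widetilde{\longrightarrow}_r^*}\mathcal S'$ iff there are an index set $I$, terms $s_i$ and finite sums $S'_i$ with $\mathcal S=\{s_i\}_{i\in I}$, $\mathcal S'=\bigcup_i S'_i$ and $s_i\longrightarrow_r^* S'_i$. Taylor approximation $\ltimes$ is inductive: $x\ltimes x$; $s\ltimes M\Rightarrow\lambda x.s\ltimes\lambda x.M$;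 ($s\ltimes M$ and $t_i\ltimes N$ for all $i$) $\Rightarrow\langle s\rangle[t_1,\dots,t_n]\ltimes(M)N$; no resource term approximates $\bot$; $\mathcal T(M)=\{s : s\ltimes M\}$, so $\mathcal T(\bot)=\emptyset$. *)

theory Defs
  imports "HOL-Library.Multiset" "HOL-Library.BNF_Corec"
begin

codatatype lterm = LVar nat | LLam lterm | LApp lterm lterm | LBot

text \<open>The 001 condition: nu Y. mu X. (V + lambda V. X + (X)Y + bot).\<close>

inductive ind001 :: "(lterm \<Rightarrow> bool) \<Rightarrow> lterm \<Rightarrow> bool" for Y where
  i_var: "ind001 Y (LVar n)"
| i_bot: "ind001 Y LBot"
| i_lam: "ind001 Y t \<Longrightarrow> ind001 Y (LLam t)"
| i_app: "ind001 Y t \<Longrightarrow> Y u \<Longrightarrow> ind001 Y (LApp t u)"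

lemma ind001_mono[mono]: "(\<And>x. Y x \<longrightarrow> Y' x) \<Longrightarrow> ind001 Y t \<longrightarrow> ind001 Y' t"
proof
  assume h: "\<And>x. Y x \<longrightarrow> Y' x" and i: "ind001 Y t"
  from i show "ind001 Y' t" by (induction rule: ind001.induct) (auto intro: ind001.intros h[rule_format])
qed

coinductive T001 :: "lterm \<Rightarrow> bool" where
  "ind001 T001 t \<Longrightarrow> T001 t"

primcorec lift :: "nat \<Rightarrow> nat \<Rightarrow> lterm \<Rightarrow> lterm" where
  "lift c d t = (case t of
      LVar n \<Rightarrow> LVar (if c \<le> n then n + d else n)
    | LLam s \<Rightarrow> LLam (lift (Suc c) d s)
    | LApp s u \<Rightarrow> LApp (lift c d s) (lift c d u)
    | LBot \<Rightarrow> LBot)"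

text \<open>subst k N t: substitute N (living outside the k binders) for index k,
  decrementing the free indices above k.\<close>
corec subst :: "nat \<Rightarrow> lterm \<Rightarrow> lterm \<Rightarrow> lterm" where
  "subst k N t = (case t of
      LVar n \<Rightarrow> (if n = k then lift 0 k N else if k < n then LVar (n - 1) else LVar n)
    | LLam s \<Rightarrow> LLam (subst (Suc k) N s)
    | LApp s u \<Rightarrow> LApp (subst k N s) (subst k N u)
    | LBot \<Rightarrow> LBot)"

inductive beta :: "lterm \<Rightarrow> lterm \<Rightarrow> bool" where
  b_redex: "beta (LApp (LLam M) N) (subst 0 N M)"
| b_lam: "beta M M' \<Longrightarrow> beta (LLam M) (LLam M')"
| b_appl: "beta M M' \<Longrightarrow> beta (LApp M N) (LApp M' N)"
| b_appr: "beta N N' \<Longrightarrow> beta (LApp M N) (LApp M N')"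

inductive infind :: "(lterm \<Rightarrow> lterm \<Rightarrow> bool) \<Rightarrow> (lterm \<Rightarrow> lterm \<Rightarrow> bool) \<Rightarrow> lterm \<Rightarrow> lterm \<Rightarrow> bool"
  for R Y where
  inf_var: "R\<^sup>*\<^sup>* M (LVar x) \<Longrightarrow> infind R Y M (LVar x)"
| inf_bot: "R\<^sup>*\<^sup>* M LBot \<Longrightarrow> infind R Y M LBot"
| inf_lam: "R\<^sup>*\<^sup>* M (LLam P) \<Longrightarrow> infind R Y P P' \<Longrightarrow> infind R Y M (LLam P')"
| inf_app: "R\<^sup>*\<^sup>* M (LApp P Q) \<Longrightarrow> infind R Y P P' \<Longrightarrow> Y Q Q' \<Longrightarrow> infind R Y M (LApp P' Q')"

lemma infind_mono[mono]: "(\<And>x y. Y x y \<longrightarrow> Y' x y) \<Longrightarrow> infind R Y M N \<longrightarrow> infind R Y' M N"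
proof
  assume h: "\<And>x y. Y x y \<longrightarrow> Y' x y" and i: "infind R Y M N"
  from i show "infind R Y' M N" by (induction rule: infind.induct) (auto intro: infind.intros h[rule_format])
qed

coinductive infred :: "(lterm \<Rightarrow> lterm \<Rightarrow> bool) \<Rightarrow> lterm \<Rightarrow> lterm \<Rightarrow> bool" for R where
  "infind R (infred R) M N \<Longrightarrow> infred R M N"

abbreviation beta_inf :: "lterm \<Rightarrow> lterm \<Rightarrow> bool" where
  "beta_inf \<equiv> infred beta"

fun lams :: "nat \<Rightarrow> lterm \<Rightarrow> lterm" where
  "lams 0 M = M"
| "lams (Suc m) M = LLam (lams m M)"

definition apps :: "lterm \<Rightarrow> lterm list \<Rightarrow> lterm" where
  "apps M Ns = foldl LApp M Ns"

definition solvable :: "lterm \<Rightarrow> bool" where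
  "solvable M \<longleftrightarrow> (\<exists>m Ns. (\<forall>N\<in>set Ns. T001 N) \<and> beta_inf (apps (lams m M) Ns) (LLam (LVar 0)))"

inductive bot0 :: "lterm \<Rightarrow> lterm \<Rightarrow> bool" where
  bot_unsolv: "T001 M \<Longrightarrow> \<not> solvable M \<Longrightarrow> bot0 M LBot"
| bot_lam: "bot0 (LLam LBot) LBot"
| bot_app: "bot0 (LApp LBot M) LBot"

inductive betabot :: "lterm \<Rightarrow> lterm \<Rightarrow> bool" where
  bb_redex: "betabot (LApp (LLam M) N) (subst 0 N M)"
| bb_bot: "bot0 M M' \<Longrightarrow> betabot M M'"
| bb_lam: "betabot M M' \<Longrightarrow> betabot (LLam M) (LLam M')"
| bb_appl: "betabot M M' \<Longrightarrow> betabot (LApp M N) (LApp M' N)"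
| bb_appr: "betabot N N' \<Longrightarrow> betabot (LApp M N) (LApp M N')"

abbreviation betabot_inf :: "lterm \<Rightarrow> lterm \<Rightarrow> bool" where
  "betabot_inf \<equiv> infred betabot"

datatype rterm = RVar nat | RLam rterm | RApp rterm "rterm multiset"

primrec rlift :: "nat \<Rightarrow> nat \<Rightarrow> rterm \<Rightarrow> rterm" where
  "rlift c d (RVar n) = RVar (if c \<le> n then n + d else n)"
| "rlift c d (RLam s) = RLam (rlift (Suc c) d s)"
| "rlift c d (RApp s ts) = RApp (rlift c d s) (image_mset (rlift c d) ts)"

text \<open>lsub k T s s': s' is a summand of the linear substitution of the bag T for
  index k in s (sums are sets, so the sum over bijections is the set of its summands).\<close>
inductive lsub :: "nat \<Rightarrow> rterm multiset \<Rightarrow> rterm \<Rightarrow> rterm \<Rightarrow> bool" where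
  ls_hit: "lsub k {#t#} (RVar k) (rlift 0 k t)"
| ls_miss: "n \<noteq> k \<Longrightarrow> lsub k {#} (RVar n) (RVar (if k < n then n - 1 else n))"
| ls_lam: "lsub (Suc k) T s s' \<Longrightarrow> lsub k T (RLam s) (RLam s')"
| ls_app: "lsub k T0 s s' \<Longrightarrow> length Ts = length us \<Longrightarrow> length us' = length us \<Longrightarrow>
     (\<forall>i<length us. lsub k (Ts ! i) (us ! i) (us' ! i)) \<Longrightarrow>
     lsub k (T0 + sum_list Ts) (RApp s (mset us)) (RApp s' (mset us'))"

definition linsubst :: "rterm \<Rightarrow> rterm multiset \<Rightarrow> rterm set" where
  "linsubst s ts = {s'. lsub 0 ts s s'}"

inductive rred :: "rterm \<Rightarrow> rterm set \<Rightarrow> bool" where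
  r_redex: "rred (RApp (RLam s) ts) (linsubst s ts)"
| r_lam: "rred s T \<Longrightarrow> rred (RLam s) (RLam ` T)"
| r_head: "rred s T \<Longrightarrow> rred (RApp s ts) ((\<lambda>s'. RApp s' ts) ` T)"
| r_arg: "rred t T \<Longrightarrow> rred (RApp s (add_mset t ts)) ((\<lambda>t'. RApp s (add_mset t' ts)) ` T)"

definition rsum_step :: "rterm set \<Rightarrow> rterm set \<Rightarrow> bool" where
  "rsum_step S S' \<longleftrightarrow> (\<exists>s0 T0 ss Ts. rred s0 T0 \<and> length Ts = length ss \<and>
     (\<forall>i<length ss. rred (ss ! i) (Ts ! i) \<or> Ts ! i = {ss ! i}) \<and>
     S = insert s0 (set ss) \<and> S' = T0 \<union> \<Union>(set Ts))"

abbreviation rsum_star :: "rterm set \<Rightarrow> rterm set \<Rightarrow> bool" where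
  "rsum_star \<equiv> rsum_step\<^sup>*\<^sup>*"

text \<open>Extension to arbitrary sets: indexed by the family of pairs (s_i, S'_i).\<close>
definition rtilde :: "rterm set \<Rightarrow> rterm set \<Rightarrow> bool" where
  "rtilde S S' \<longleftrightarrow> (\<exists>P :: (rterm \<times> rterm set) set.
     S = fst ` P \<and> S' = \<Union>(snd ` P) \<and> (\<forall>(s, T)\<in>P. finite T \<and> rsum_star {s} T))"

inductive approx :: "rterm \<Rightarrow> lterm \<Rightarrow> bool" where
  a_var: "approx (RVar n) (LVar n)"
| a_lam: "approx s M \<Longrightarrow> approx (RLam s) (LLam M)"
| a_app: "approx s M \<Longrightarrow> (\<forall>t\<in>#ts. approx t N) \<Longrightarrow> approx (RApp s ts) (LApp M N)"

definition taylor :: "lterm \<Rightarrow> rterm set" where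
  "taylor M = {s. approx s M}"

end

theory Submission
  imports Defs
begin

lemma lift_simps[simp]:
  "lift c d (LVar n) = LVar (if c \<le> n then n + d else n)"
  "lift c d (LLam s) = LLam (lift (Suc c) d s)"
  "lift c d (LApp s u) = LApp (lift c d s) (lift c d u)"
  "lift c d LBot = LBot"
  by (subst lift.code; simp)+

lemma subst_simps[simp]:
  "subst k N (LVar n) = (if n = k then lift 0 k N else if k < n then LVar (n - 1) else LVar n)"
  "subst k N (LLam s) = LLam (subst (Suc k) N s)"
  "subst k N (LApp s u) = LApp (subst k N s) (subst k N u)"
  "subst k N LBot = LBot"
  by (subst subst.code; simp)+

subsection \<open>Sums\<close>

lemma rsum_context:
  assumes f: "\<And>s T. rred s T \<Longrightarrow> rred (f s) (f ` T)"
  and "rsum_star A B"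
  shows "rsum_star (f ` A) (f ` B)"
  using assms(2)
proof (induction rule: rtranclp_induct)
  case base then show ?case by simp
next
  case (step B C)
  from step(2) obtain s0 T0 ss Ts where h: "rred s0 T0" "length Ts = length ss"
    "\<forall>i<length ss. rred (ss ! i) (Ts ! i) \<or> Ts ! i = {ss ! i}"
    "B = insert s0 (set ss)" "C = T0 \<union> \<Union>(set Ts)"
    unfolding rsum_step_def by blast
  have "rsum_step (f ` B) (f ` C)"
    unfolding rsum_step_def
  proof (intro exI conjI)
    show "rred (f s0) (f ` T0)" using f h(1) .
    show "length (map ((`) f) Ts) = length (map f ss)" using h(2) by simp
    show "\<forall>i<length (map f ss). rred (map f ss ! i) (map ((`) f) Ts ! i) \<or> map ((`) f) Ts ! i = {map f ss ! i}"
      using h(2,3) f by auto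
    show "f ` B = insert (f s0) (set (map f ss))" using h(4) by simp
    show "f ` C = f ` T0 \<union> \<Union> (set (map ((`) f) Ts))" using h(5) by auto
  qed
  then show ?case using step(3) by simp
qed

lemma rsum_union:
  assumes "rsum_star A B" and "finite C"
  shows "rsum_star (C \<union> A) (C \<union> B)"
  using assms(1)
proof (induction rule: rtranclp_induct)
  case base then show ?case by simp
next
  case (step B D)
  from step(2) obtain s0 T0 ss Ts where h: "rred s0 T0" "length Ts = length ss"
    "\<forall>i<length ss. rred (ss ! i) (Ts ! i) \<or> Ts ! i = {ss ! i}"
    "B = insert s0 (set ss)" "D = T0 \<union> \<Union>(set Ts)"
    unfolding rsum_step_def by blast
  obtain cs where cs: "set cs = C" using finite_list[OF assms(2)] by blast
  have "rsum_step (C \<union> B) (C \<union> D)"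
    unfolding rsum_step_def
  proof (intro exI conjI)
    show "rred s0 T0" using h(1) .
    show "length (Ts @ map (\<lambda>c. {c}) cs) = length (ss @ cs)" using h(2) by simp
    show "\<forall>i<length (ss @ cs). rred ((ss @ cs) ! i) ((Ts @ map (\<lambda>c. {c}) cs) ! i) \<or> (Ts @ map (\<lambda>c. {c}) cs) ! i = {(ss @ cs) ! i}"
      using h(2,3) by (auto simp: nth_append)
    show "C \<union> B = insert s0 (set (ss @ cs))" using h(4) cs by auto
    show "C \<union> D = T0 \<union> \<Union> (set (Ts @ map (\<lambda>c. {c}) cs))" using h(5) cs by auto
  qed
  then show ?case using step(3) by simp
qed

lemma rsum_par_img:
  assumes "finite A" and "\<And>x. x \<in> A \<Longrightarrow> rsum_star {f x} (B x) \<and> finite (B x)"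
  shows "rsum_star (f ` A) (\<Union>x\<in>A. B x)"
  using assms
proof (induction A rule: finite_induct)
  case empty then show ?case by simp
next
  case (insert a A)
  have 1: "rsum_star (f ` A \<union> {f a}) (f ` A \<union> B a)"
    using rsum_union[of "{f a}" "B a" "f ` A"] insert by auto
  have 2: "rsum_star (B a \<union> f ` A) (B a \<union> (\<Union>x\<in>A. B x))"
    using rsum_union[of "f ` A" "\<Union>x\<in>A. B x" "B a"] insert by auto
  from 1 2 show ?case by (simp add: Un_commute insert_absorb)
qed

lemma rsum_par:
  assumes "finite A" and "\<And>x. x \<in> A \<Longrightarrow> rsum_star {x} (B x) \<and> finite (B x)"
  shows "rsum_star A (\<Union>x\<in>A. B x)"
  using rsum_par_img[of A "\<lambda>x. x" B] assms by simp

lemma rsum_one: "rred s T \<Longrightarrow> rsum_step {s} T"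
  unfolding rsum_step_def by (rule exI[of _ s], rule exI[of _ T], rule exI[of _ "[]"], rule exI[of _ "[]"]) simp

lemma rsum_seq:
  assumes "rsum_star {s} A" "finite A"
    and "\<And>x. x \<in> A \<Longrightarrow> \<exists>T. finite T \<and> rsum_star {x} T \<and> T \<subseteq> Y"
  shows "\<exists>T. finite T \<and> rsum_star {s} T \<and> T \<subseteq> Y"
proof -
  obtain B where B: "\<And>x. x \<in> A \<Longrightarrow> finite (B x) \<and> rsum_star {x} (B x) \<and> B x \<subseteq> Y"
    using assms(3) by metis
  have "rsum_star A (\<Union>x\<in>A. B x)" using rsum_par[OF assms(2)] B by blast
  then show ?thesis using assms(1,2) B
    by (intro exI[of _ "\<Union>x\<in>A. B x"]) (auto intro: rtranclp_trans)
qed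

lemma rsum_comb:
  assumes "rsum_star {s} A" "finite A" "A \<subseteq> X" "a \<in> A"
    "rsum_star {a} Ta" "finite Ta" "t \<in> Ta" "Ta \<subseteq> Y"
    and "\<And>x. x \<in> X \<Longrightarrow> \<exists>T. finite T \<and> rsum_star {x} T \<and> T \<subseteq> Y"
  shows "\<exists>T. finite T \<and> rsum_star {s} T \<and> T \<subseteq> Y \<and> t \<in> T"
proof -
  obtain B where B: "\<And>x. x \<in> X \<Longrightarrow> finite (B x) \<and> rsum_star {x} (B x) \<and> B x \<subseteq> Y"
    using assms(9) by metis
  define B' where "B' x = (if x = a then Ta else B x)" for x
  have "rsum_star A (\<Union>x\<in>A. B' x)"
    by (rule rsum_par[OF assms(2)]) (use B assms(3,5,6) in \<open>auto simp: B'_def\<close>)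
  moreover have "t \<in> (\<Union>x\<in>A. B' x)" using assms(4,7) unfolding B'_def by auto
  moreover have "(\<Union>x\<in>A. B' x) \<subseteq> Y" "finite (\<Union>x\<in>A. B' x)" using B assms(2,3,6,8) unfolding B'_def by auto
  ultimately show ?thesis using assms(1) by (meson rtranclp_trans)
qed

definition combos :: "rterm \<Rightarrow> rterm multiset \<Rightarrow> rterm set list \<Rightarrow> rterm set" where
  "combos s E Ts = {RApp s (E + mset us) | us. length us = length Ts \<and> (\<forall>i<length Ts. us ! i \<in> Ts ! i)}"

lemma combos_finite:
  assumes "\<forall>T\<in>set Ts. finite T"
  shows "finite (combos s E Ts)"
proof -
  have "combos s E Ts \<subseteq> (\<lambda>us. RApp s (E + mset us)) ` {us. set us \<subseteq> \<Union>(set Ts) \<and> length us = length Ts}"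
  proof
    fix x assume "x \<in> combos s E Ts"
    then obtain us where us: "x = RApp s (E + mset us)" "length us = length Ts" "\<forall>i<length Ts. us ! i \<in> Ts ! i"
      unfolding combos_def by auto
    have "set us \<subseteq> \<Union>(set Ts)"
    proof
      fix u assume "u \<in> set us"
      then obtain i where "i < length us" "u = us ! i" by (auto simp: in_set_conv_nth)
      then show "u \<in> \<Union>(set Ts)" using us by (metis UnionI nth_mem)
    qed
    then show "x \<in> (\<lambda>us. RApp s (E + mset us)) ` {us. set us \<subseteq> \<Union>(set Ts) \<and> length us = length Ts}"
      using us by auto
  qed
  moreover have "finite {us. set us \<subseteq> \<Union>(set Ts) \<and> length us = length Ts}"
    using assms by (intro finite_lists_length_eq) auto
  ultimately show ?thesis by (meson finite_imageI finite_subset)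
qed

lemma combos_Cons:
  "combos s E (T # Ts) = (\<Union>t'\<in>T. combos s (add_mset t' E) Ts)"
proof (intro set_eqI iffI)
  fix x assume "x \<in> combos s E (T # Ts)"
  then obtain us where us: "x = RApp s (E + mset us)" "length us = Suc (length Ts)"
    "\<forall>i<Suc (length Ts). us ! i \<in> (T # Ts) ! i" unfolding combos_def by auto
  then obtain u us' where "us = u # us'" by (cases us) auto
  with us show "x \<in> (\<Union>t'\<in>T. combos s (add_mset t' E) Ts)"
    unfolding combos_def by (auto intro!: bexI[of _ u] exI[of _ us'])
next
  fix x assume "x \<in> (\<Union>t'\<in>T. combos s (add_mset t' E) Ts)"
  then obtain t' us where us: "t' \<in> T" "x = RApp s (add_mset t' E + mset us)" "length us = length Ts"
    "\<forall>i<length Ts. us ! i \<in> Ts ! i" unfolding combos_def by auto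
  show "x \<in> combos s E (T # Ts)" unfolding combos_def
  proof (intro CollectI exI[of _ "t' # us"] conjI)
    show "x = RApp s (E + mset (t' # us))" using us by simp
    show "length (t' # us) = length (T # Ts)" using us by simp
    show "\<forall>i<length (T # Ts). (t' # us) ! i \<in> (T # Ts) ! i"
    proof (intro allI impI)
      fix i assume "i < length (T # Ts)"
      then show "(t' # us) ! i \<in> (T # Ts) ! i" using us by (cases i) auto
    qed
  qed
qed

lemma rsum_bag:
  "length Ts = length ts \<Longrightarrow> (\<forall>i<length ts. rsum_star {ts ! i} (Ts ! i) \<and> finite (Ts ! i)) \<Longrightarrow>
   rsum_star {RApp s (E + mset ts)} (combos s E Ts)"
proof (induction ts arbitrary: Ts E)
  case Nil then show ?case by (simp add: combos_def)
next
  case (Cons t ts)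
  then obtain T Ts' where Ts: "Ts = T # Ts'" by (cases Ts) auto
  define f where "f x = RApp s (add_mset x (E + mset ts))" for x
  have 1: "rsum_star (f ` {t}) (f ` T)"
    by (rule rsum_context) (use Cons.prems Ts in \<open>auto simp: f_def intro: rred.r_arg\<close>)
  have 2: "rsum_star (f ` T) (\<Union>t'\<in>T. combos s (add_mset t' E) Ts')"
  proof (rule rsum_par_img)
    show "finite T" using Cons.prems Ts by auto
    fix x assume "x \<in> T"
    have hts: "\<forall>i<length ts. rsum_star {ts!i} (Ts'!i) \<and> finite (Ts'!i)"
    proof (intro allI impI)
      fix i assume "i < length ts"
      then show "rsum_star {ts!i} (Ts'!i) \<and> finite (Ts'!i)" using Cons.prems(2)[rule_format, of "Suc i"] Ts by simp
    qed
    have "rsum_star {RApp s (add_mset x E + mset ts)} (combos s (add_mset x E) Ts')"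
      using Cons.IH[of Ts' "add_mset x E"] hts Cons.prems(1) Ts by simp
    moreover have "finite (combos s (add_mset x E) Ts')"
      using hts Cons.prems(1) Ts by (intro combos_finite) (auto simp: in_set_conv_nth)
    ultimately show "rsum_star {f x} (combos s (add_mset x E) Ts') \<and> finite (combos s (add_mset x E) Ts')"
      by (simp add: f_def)
  qed
  show ?case using 1 2 unfolding Ts combos_Cons by (simp add: f_def)
qed

primrec rsz :: "rterm \<Rightarrow> nat" where
  "rsz (RVar n) = 1"
| "rsz (RLam s) = Suc (rsz s)"
| "rsz (RApp s ts) = Suc (rsz s + sum_mset (image_mset rsz ts))"

lemma rsz_rlift[simp]: "rsz (rlift c d t) = rsz t"
proof (induction t arbitrary: c)
  case (RApp s ts)
  have "image_mset rsz (image_mset (rlift c d) ts) = image_mset rsz ts"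
    using RApp.IH(2) by (simp add: image_mset.compositionality o_def cong: image_mset_cong)
  then show ?case using RApp by simp
qed auto

lemma sum_list_map_nth: "sum_list (map f xs) = (\<Sum>i<length xs. f (xs ! i))"
  by (induction xs rule: rev_induct) (auto simp: nth_append)

lemma sum_mset_img_sum_list: "sum_mset (image_mset f (sum_list Ts)) = sum_list (map (\<lambda>T. sum_mset (image_mset f T)) Ts)"
  by (induction Ts) auto

lemma sum_mset_img_sum_mset: "sum_mset (image_mset f (sum_mset MT)) = sum_mset (image_mset (\<lambda>T. sum_mset (image_mset f T)) MT)"
  by (induction MT) auto

lemma lsub_size: "lsub k T s s' \<Longrightarrow> rsz s' + size T = rsz s + sum_mset (image_mset rsz T)"
proof (induction rule: lsub.induct)
  case (ls_app k T0 s s' Ts us us')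
  have "sum_list (map rsz us') + sum_list (map size Ts) =
        sum_list (map rsz us) + sum_list (map (\<lambda>T. sum_mset (image_mset rsz T)) Ts)"
    using ls_app.hyps(2,3) ls_app.IH
    by (simp add: sum_list_map_nth sum.distrib[symmetric])
  then show ?case using ls_app.IH(1)
    by (simp add: sum_mset_img_sum_list sum_mset_img_sum_mset sum_mset_sum_list[symmetric] size_multiset_sum_list)
qed auto

lemma rred_size: "rred s T \<Longrightarrow> u \<in> T \<Longrightarrow> rsz u < rsz s"
proof (induction arbitrary: u rule: rred.induct)
  case (r_redex s ts)
  then have "rsz u + size ts = rsz s + sum_mset (image_mset rsz ts)"
    using lsub_size unfolding linsubst_def by blast
  then show ?case by simp
qed auto

lemma rsum_size: "rsum_star A B \<Longrightarrow> u \<in> B \<Longrightarrow> \<exists>a\<in>A. rsz u \<le> rsz a"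
proof (induction arbitrary: u rule: rtranclp_induct)
  case base then show ?case by auto
next
  case (step B C)
  from step(2) obtain s0 T0 ss Ts where h: "rred s0 T0" "length Ts = length ss"
    "\<forall>i<length ss. rred (ss ! i) (Ts ! i) \<or> Ts ! i = {ss ! i}"
    "B = insert s0 (set ss)" "C = T0 \<union> \<Union>(set Ts)"
    unfolding rsum_step_def by blast
  have "\<exists>b\<in>B. rsz u \<le> rsz b"
  proof (cases "u \<in> T0")
    case True then show ?thesis using rred_size[OF h(1)] h(4) by (auto intro: less_imp_le)
  next
    case False
    then obtain i where i: "i < length ss" "u \<in> Ts ! i" using h(2,5) step(4) by (auto simp: in_set_conv_nth)
    have "rred (ss ! i) (Ts ! i) \<or> Ts ! i = {ss ! i}" using h(3) i(1) by blast
    then have "rsz u \<le> rsz (ss ! i)" using rred_size[of "ss ! i" "Ts ! i" u] i(2) by (auto intro: less_imp_le)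
    then show ?thesis using h(4) i(1) by auto
  qed
  then show ?case using step(3) by (meson order_trans)
qed

inductive_simps approx_RVar[simp]: "approx (RVar n) M"
inductive_simps approx_RLam[simp]: "approx (RLam s) M"
inductive_simps approx_RApp[simp]: "approx (RApp s ts) M"
inductive_simps approx_LBot[simp]: "approx s LBot"

lemma submsets_finite: "finite {T0. T0 \<subseteq># (T :: 'a multiset)}"
proof -
  have "{T0. T0 \<subseteq># T} \<subseteq> mset ` {ys. set ys \<subseteq> set_mset T \<and> length ys \<le> size T}"
  proof
    fix T0 assume "T0 \<in> {T0. T0 \<subseteq># T}"
    then have h: "T0 \<subseteq># T" by simp
    obtain ys where ys: "mset ys = T0" using ex_mset by blast
    have "set ys \<subseteq> set_mset T" using ys h by (metis set_mset_mono set_mset_mset)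
    moreover have "length ys \<le> size T" using ys h by (metis size_mset size_mset_mono)
    ultimately show "T0 \<in> mset ` {ys. set ys \<subseteq> set_mset T \<and> length ys \<le> size T}" using ys by auto
  qed
  moreover have "finite {ys. set ys \<subseteq> set_mset T \<and> length ys \<le> size T}"
    by (rule finite_lists_length_le) simp
  ultimately show ?thesis by (meson finite_imageI finite_subset)
qed

lemma nth_subseteq_sum_list: "i < length Ts \<Longrightarrow> Ts ! i \<subseteq># sum_list Ts"
proof (induction Ts arbitrary: i)
  case (Cons T Ts) then show ?case
    by (cases i) (auto intro: subset_mset.order_trans[OF _ mset_subset_eq_add_right])
qed simp

lemma lsub_finite: "finite {s'. lsub k T s s'}"
proof (induction s arbitrary: k T)
  case (RVar n)
  have "{s'. lsub k T (RVar n) s'} \<subseteq> (\<lambda>t. rlift 0 k t) ` set_mset T \<union> {RVar (if k < n then n - 1 else n)}"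
    by (auto elim: lsub.cases)
  then show ?case by (rule finite_subset) auto
next
  case (RLam s)
  have "{s'. lsub k T (RLam s) s'} \<subseteq> RLam ` {s'. lsub (Suc k) T s s'}"
    by (auto elim: lsub.cases)
  then show ?case using RLam.IH by (rule finite_subset[OF _ finite_imageI])
next
  case (RApp s0 bag)
  define A where "A = (\<Union>T0\<in>{T0. T0 \<subseteq># T}. {s'. lsub k T0 s0 s'})"
  define B where "B = (\<Union>(u, T')\<in>set_mset bag \<times> {T0. T0 \<subseteq># T}. {s'. lsub k T' u s'})"
  have fA: "finite A" unfolding A_def using RApp.IH(1) submsets_finite by blast
  have fB: "finite B" unfolding B_def
    by (rule finite_UN_I) (use RApp.IH(2) submsets_finite[of T] in \<open>auto intro: finite_cartesian_product\<close>)
  have "{s'. lsub k T (RApp s0 bag) s'} \<subseteq> (\<lambda>(a, l). RApp a (mset l)) ` (A \<times> {l. set l \<subseteq> B \<and> length l = size bag})"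
  proof
    fix s' assume "s' \<in> {s'. lsub k T (RApp s0 bag) s'}"
    then have "lsub k T (RApp s0 bag) s'" by simp
    then obtain T0 Ts us us' s'' where h: "T = T0 + sum_list Ts" "bag = mset us" "s' = RApp s'' (mset us')"
      "lsub k T0 s0 s''" "length Ts = length us" "length us' = length us"
      "\<forall>i<length us. lsub k (Ts ! i) (us ! i) (us' ! i)"
      by (cases rule: lsub.cases) auto
    have "T0 \<subseteq># T" using h(1) by simp
    then have "s'' \<in> A" unfolding A_def using h(4) by auto
    moreover have "set us' \<subseteq> B"
    proof
      fix x assume "x \<in> set us'"
      then obtain i where i: "i < length us'" "x = us' ! i" by (auto simp: in_set_conv_nth)
      have "Ts ! i \<subseteq># T" using h(1,5,6) i(1)
        using nth_subseteq_sum_list[of i Ts] by (metis mset_subset_eq_add_right subset_mset.order_trans add.commute)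
      moreover have "us ! i \<in># bag" using h(2,6) i(1) by simp
      ultimately show "x \<in> B" unfolding B_def using h(6,7) i by fastforce
    qed
    ultimately show "s' \<in> (\<lambda>(a, l). RApp a (mset l)) ` (A \<times> {l. set l \<subseteq> B \<and> length l = size bag})"
      using h(2,3,6) by auto
  qed
  moreover have "finite (A \<times> {l. set l \<subseteq> B \<and> length l = size bag})"
    using fA fB by (simp add: finite_lists_length_eq)
  ultimately show ?case by (meson finite_imageI finite_subset)
qed

lemma rred_finite: "rred s T \<Longrightarrow> finite T"
  by (induction rule: rred.induct) (auto simp: linsubst_def lsub_finite)

lemma approx_lift: "approx t N \<Longrightarrow> approx (rlift c d t) (lift c d N)"
  by (induction arbitrary: c rule: approx.induct) auto

lemma approx_lift_inv: "approx t (lift c d N) \<Longrightarrow> \<exists>t0. t = rlift c d t0 \<and> approx t0 N"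
proof (induction t arbitrary: c N)
  case (RVar n)
  then show ?case by (cases N) (auto intro: exI[of _ "RVar _"])
next
  case (RLam t)
  then show ?case by (cases N) (auto, metis rlift.simps(2) approx.a_lam)
next
  case (RApp t ts)
  then obtain N1 N2 where N: "N = LApp N1 N2" by (cases N) auto
  with RApp.prems have h: "approx t (lift c d N1)" "\<forall>x\<in>#ts. approx x (lift c d N2)" by auto
  obtain t0 where t0: "t = rlift c d t0" "approx t0 N1" using RApp.IH(1) h(1) by blast
  have "\<forall>x\<in>#ts. \<exists>x0. x = rlift c d x0 \<and> approx x0 N2" using RApp.IH(2) h(2) by blast
  then obtain g where g: "\<forall>x\<in>#ts. x = rlift c d (g x) \<and> approx (g x) N2" by metis
  have "image_mset (rlift c d) (image_mset g ts) = ts"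
    using g by (simp add: image_mset.compositionality o_def image_mset_cong[of ts _ id, simplified])
  then show ?case using t0 g N by (intro exI[of _ "RApp t0 (image_mset g ts)"]) auto
qed

lemma approx_subst: "lsub k ts s s' \<Longrightarrow> approx s M \<Longrightarrow> \<forall>t\<in>#ts. approx t N \<Longrightarrow> approx s' (subst k N M)"
proof (induction arbitrary: M rule: lsub.induct)
  case (ls_hit k t)
  then show ?case by (auto intro: approx_lift)
next
  case (ls_miss n k)
  then show ?case by auto
next
  case (ls_lam k T s s')
  then show ?case by auto
next
  case (ls_app k T0 s s' Ts us us')
  then obtain M1 M2 where M: "M = LApp M1 M2" "approx s M1" "\<forall>u\<in>set us. approx u M2" by auto
  have "approx s' (subst k N M1)" using ls_app M by auto
  moreover have "\<forall>x\<in>set us'. approx x (subst k N M2)"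
  proof
    fix x assume "x \<in> set us'"
    then obtain i where i: "i < length us" "x = us' ! i" using ls_app.hyps(3) by (auto simp: in_set_conv_nth)
    have "\<forall>t\<in>#Ts ! i. approx t N" using ls_app.prems(2) nth_subseteq_sum_list[of i Ts] i(1) ls_app.hyps(2)
      by (metis mset_subset_eqD union_iff)
    then show "approx x (subst k N M2)" using ls_app.IH(2) i M(3) by auto
  qed
  ultimately show ?case using M by auto
qed

lemma approx_subst_var: "approx t (subst k N (LVar n)) \<Longrightarrow> \<exists>s ts. approx s (LVar n) \<and> (\<forall>x\<in>#ts. approx x N) \<and> lsub k ts s t"
proof (cases "n = k")
  case True
  assume "approx t (subst k N (LVar n))"
  then have "approx t (lift 0 k N)" using True by simp
  then obtain t0 where "t = rlift 0 k t0" "approx t0 N" using approx_lift_inv by blast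
  then show ?thesis using True by (intro exI[of _ "RVar k"] exI[of _ "{#t0#}"]) (auto intro: lsub.ls_hit)
next
  case False
  assume "approx t (subst k N (LVar n))"
  then have "t = RVar (if k < n then n - 1 else n)" using False by (auto elim: approx.cases)
  moreover have "lsub k {#} (RVar n) (RVar (if k < n then n - 1 else n))" using False by (rule lsub.ls_miss)
  ultimately show ?thesis by (intro exI[of _ "RVar n"] exI[of _ "{#}"]) auto
qed

lemma approx_subst_inv: "approx t (subst k N M) \<Longrightarrow> \<exists>s ts. approx s M \<and> (\<forall>x\<in>#ts. approx x N) \<and> lsub k ts s t"
proof (induction t arbitrary: k M)
  case (RVar x)
  show ?case
  proof (cases M)
    case (LVar n) then show ?thesis using RVar.prems approx_subst_var by blast
  qed (use RVar.prems in auto)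
next
  case (RLam t)
  show ?case
  proof (cases M)
    case (LVar n) then show ?thesis using RLam.prems approx_subst_var by blast
  next
    case (LLam M')
    then have "approx t (subst (Suc k) N M')" using RLam.prems by simp
    then obtain s ts where "approx s M'" "\<forall>x\<in>#ts. approx x N" "lsub (Suc k) ts s t" using RLam.IH by blast
    then show ?thesis using LLam by (intro exI[of _ "RLam s"] exI[of _ ts]) (auto intro: lsub.ls_lam)
  qed (use RLam.prems in auto)
next
  case (RApp t bag)
  show ?case
  proof (cases M)
    case (LVar n) then show ?thesis using RApp.prems approx_subst_var by blast
  next
    case (LApp M1 M2)
    then have h: "approx t (subst k N M1)" "\<forall>x\<in>#bag. approx x (subst k N M2)" using RApp.prems by auto
    obtain s1 T0 where s1: "approx s1 M1" "\<forall>x\<in>#T0. approx x N" "lsub k T0 s1 t" using RApp.IH(1) h(1) by blast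
    obtain xs where xs: "mset xs = bag" using ex_mset by blast
    have "\<forall>i<length xs. \<exists>s ts. approx s M2 \<and> (\<forall>x\<in>#ts. approx x N) \<and> lsub k ts s (xs ! i)"
      using RApp.IH(2) h(2) xs by (metis nth_mem_mset)
    then obtain f g where fg: "\<forall>i<length xs. approx (f i) M2 \<and> (\<forall>x\<in>#g i. approx x N) \<and> lsub k (g i) (f i) (xs ! i)"
      by metis
    define us where "us = map f [0..<length xs]"
    define Ts where "Ts = map g [0..<length xs]"
    have "lsub k (T0 + sum_list Ts) (RApp s1 (mset us)) (RApp t (mset xs))"
      by (rule lsub.ls_app) (use s1 fg in \<open>auto simp: us_def Ts_def\<close>)
    moreover have "approx (RApp s1 (mset us)) M" using LApp s1 fg by (auto simp: us_def)
    moreover have "\<forall>x\<in>#T0 + sum_list Ts. approx x N" using s1 fg by (auto simp: Ts_def)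
    ultimately show ?thesis using xs by blast
  qed (use RApp.prems in auto)
qed

primrec rhead :: "rterm \<Rightarrow> bool" where
  "rhead (RVar n) = True"
| "rhead (RLam s) = False"
| "rhead (RApp s ts) = rhead s"

primrec rhnf :: "rterm \<Rightarrow> bool" where
  "rhnf (RVar n) = True"
| "rhnf (RLam s) = rhnf s"
| "rhnf (RApp s ts) = rhead s"

lemma apps_Nil[simp]: "apps X [] = X" by (simp add: apps_def)
lemma apps_Cons[simp]: "apps X (N # Ns) = apps (LApp X N) Ns" by (simp add: apps_def)
lemma apps_snoc[simp]: "apps X (Ns @ [N]) = LApp (apps X Ns) N" by (simp add: apps_def)

lemma head_shape: "approx s M \<Longrightarrow> rhead s \<Longrightarrow> \<exists>z Ps. M = apps (LVar z) Ps"
proof (induction s arbitrary: M)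
  case (RApp s ts)
  then obtain M1 M2 where M: "M = LApp M1 M2" "approx s M1" by auto
  have "rhead s" using RApp.prems(2) by simp
  then obtain z Ps where "M1 = apps (LVar z) Ps" using RApp.IH(1)[OF M(2)] by blast
  then show ?case using M by (intro exI[of _ z] exI[of _ "Ps @ [M2]"]) simp
next
  case (RVar n) then show ?case by (intro exI[of _ n] exI[of _ "[]"]) simp
qed auto

lemma hnf_shape: "approx s M \<Longrightarrow> rhnf s \<Longrightarrow> \<exists>a z Ps. M = lams a (apps (LVar z) Ps)"
proof (induction s arbitrary: M)
  case (RVar n) then show ?case by (intro exI[of _ 0] exI[of _ n] exI[of _ "[]"]) simp
next
  case (RLam s)
  then obtain M' where M: "M = LLam M'" "approx s M'" by auto
  have "rhnf s" using RLam.prems(2) by simp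
  then obtain a z Ps where "M' = lams a (apps (LVar z) Ps)" using RLam.IH[OF M(2)] by blast
  then show ?case using M by (intro exI[of _ "Suc a"] exI[of _ z] exI[of _ Ps]) simp
next
  case (RApp s ts)
  then have "rhead (RApp s ts)" by simp
  from head_shape[OF RApp.prems(1) this] show ?case by (metis lams.simps(1))
qed

lemma head_redex: "approx s M \<Longrightarrow> \<not> rhnf s \<Longrightarrow> \<exists>T M'. rred s T \<and> beta M M' \<and> (\<forall>u\<in>T. approx u M')"
proof (induction s arbitrary: M)
  case (RVar n) then show ?case by simp
next
  case (RLam s)
  then obtain M0 where M: "M = LLam M0" "approx s M0" by auto
  have "\<not> rhnf s" using RLam.prems(2) by simp
  then obtain T M' where "rred s T" "beta M0 M'" "\<forall>u\<in>T. approx u M'" using RLam.IH[OF M(2)] by blast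
  then show ?case using M by (intro exI[of _ "RLam ` T"] exI[of _ "LLam M'"]) (auto intro: rred.r_lam beta.b_lam)
next
  case (RApp s ts)
  then obtain M1 M2 where M: "M = LApp M1 M2" "approx s M1" "\<forall>t\<in>#ts. approx t M2" by auto
  show ?case
  proof (cases s)
    case (RVar n) then show ?thesis using RApp.prems by simp
  next
    case (RLam s1)
    then obtain M0 where M0: "M1 = LLam M0" "approx s1 M0" using M by auto
    have "\<forall>u\<in>linsubst s1 ts. approx u (subst 0 M2 M0)"
      using M M0 approx_subst unfolding linsubst_def by blast
    then show ?thesis using M M0 RLam
      by (intro exI[of _ "linsubst s1 ts"] exI[of _ "subst 0 M2 M0"]) (auto intro: rred.r_redex beta.b_redex)
  next
    case (RApp s2 ts2)
    then have "\<not> rhnf s" using RApp.prems by simp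
    then obtain T M' where "rred s T" "beta M1 M'" "\<forall>u\<in>T. approx u M'" using RApp.IH(1) M by blast
    then show ?thesis using M
      by (intro exI[of _ "(\<lambda>x. RApp x ts) ` T"] exI[of _ "LApp M' M2"]) (auto intro: rred.r_head beta.b_appl)
  qed
qed

subsection \<open>Solvability of head normal forms\<close>

lemma lams_add: "lams m (lams a X) = lams (m + a) X"
  by (induction m) auto

lemma subst_lams: "subst j N (lams c B) = lams c (subst (j + c) N B)"
  by (induction c arbitrary: j) auto

lemma subst_apps: "subst j N (apps H Ps) = apps (subst j N H) (map (subst j N) Ps)"
  by (induction Ps rule: rev_induct) auto

lemma lift_lams_var: "i < c' + c \<Longrightarrow> lift c' d (lams c (LVar i)) = lams c (LVar i)"
  by (induction c arbitrary: c') auto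

lemma subst_lams_var: "i < j + c \<Longrightarrow> subst j N (lams c (LVar i)) = lams c (LVar i)"
  by (simp add: subst_lams)

lemma star_map:
  assumes h: "\<And>x y. R x y \<Longrightarrow> R (f x) (f y)" and "R\<^sup>*\<^sup>* x y"
  shows "R\<^sup>*\<^sup>* (f x) (f y)"
  using assms(2) by (induction rule: rtranclp_induct) (auto intro: rtranclp.rtrancl_into_rtrancl h)

lemma beta_apps: "beta X Y \<Longrightarrow> beta (apps X Ps) (apps Y Ps)"
  by (induction Ps rule: rev_induct) (auto intro: beta.b_appl)

lemma beta_lams: "beta X Y \<Longrightarrow> beta (lams m X) (lams m Y)"
  by (induction m) (auto intro: beta.b_lam)

lemma betas_apps: "beta\<^sup>*\<^sup>* X Y \<Longrightarrow> beta\<^sup>*\<^sup>* (apps X Ps) (apps Y Ps)"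
  by (rule star_map[of beta "\<lambda>X. apps X Ps"]) (auto intro: beta_apps)

lemma K_red: "length Ps = k \<Longrightarrow> beta\<^sup>*\<^sup>* (apps (lams (Suc k) (LVar 0)) Ps) (LLam (LVar 0))"
proof (induction Ps arbitrary: k)
  case Nil then show ?case by simp
next
  case (Cons P Ps)
  then obtain k' where k: "k = Suc k'" "length Ps = k'" by auto
  have "beta (LApp (LLam (lams (Suc k') (LVar 0))) P) (subst 0 P (lams (Suc k') (LVar 0)))"
    by (rule beta.b_redex)
  moreover have "subst 0 P (lams (Suc k') (LVar 0)) = lams (Suc k') (LVar 0)"
    by (rule subst_lams_var) simp
  ultimately have "beta (apps (lams (Suc k) (LVar 0)) (P # Ps)) (apps (lams (Suc k') (LVar 0)) Ps)"
    using k by (simp add: beta_apps)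
  then show ?case using Cons.IH[OF k(2)] by (meson converse_rtranclp_into_rtranclp)
qed

lemma K_heads:
  fixes k :: nat
  defines "Kk \<equiv> lams (Suc k) (LVar 0)"
  shows "length Ps = k \<Longrightarrow> (H = Kk \<or> (\<exists>z<n. H = LVar z)) \<Longrightarrow>
     \<exists>Ps'. length Ps' = k \<and> beta\<^sup>*\<^sup>* (apps (lams n (apps H Ps)) (replicate n Kk)) (apps Kk Ps')"
proof (induction n arbitrary: H Ps)
  case 0 then show ?case by auto
next
  case (Suc n)
  have sK: "subst j N Kk = Kk" for j N unfolding Kk_def by (rule subst_lams_var) simp
  have lK: "lift 0 n Kk = Kk" unfolding Kk_def by (rule lift_lams_var) simp
  define H' where "H' = subst n Kk H"
  have H': "H' = Kk \<or> (\<exists>z<n. H' = LVar z)"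
    using Suc.prems(2) sK lK unfolding H'_def by (auto simp: less_Suc_eq)
  have "beta (LApp (LLam (lams n (apps H Ps))) Kk) (subst 0 Kk (lams n (apps H Ps)))"
    by (rule beta.b_redex)
  moreover have "subst 0 Kk (lams n (apps H Ps)) = lams n (apps H' (map (subst n Kk) Ps))"
    by (simp add: subst_lams subst_apps H'_def)
  ultimately have 1: "beta (apps (lams (Suc n) (apps H Ps)) (replicate (Suc n) Kk))
     (apps (lams n (apps H' (map (subst n Kk) Ps))) (replicate n Kk))"
    by (simp add: beta_apps)
  obtain Ps' where P1: "length Ps' = k" and P2:
    "beta\<^sup>*\<^sup>* (apps (lams n (apps H' (map (subst n Kk) Ps))) (replicate n Kk)) (apps Kk Ps')"
    using Suc.IH[of "map (subst n Kk) Ps" H'] Suc.prems H' by auto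
  have "beta\<^sup>*\<^sup>* (apps (lams (Suc n) (apps H Ps)) (replicate (Suc n) Kk)) (apps Kk Ps')"
    by (rule converse_rtranclp_into_rtranclp[OF 1 P2])
  then show ?case using P1 by blast
qed

lemma T001_var: "T001 (LVar n)"
  by (rule T001.intros) (rule ind001.i_var)

lemma T001_lams: "T001 X \<Longrightarrow> T001 (lams c X)"
proof (induction c)
  case (Suc c)
  then have "ind001 T001 (lams c X)" by (auto elim: T001.cases)
  then show ?case by (auto intro: T001.intros ind001.i_lam)
qed simp

lemma infred_of_star: "beta\<^sup>*\<^sup>* X (LLam (LVar 0)) \<Longrightarrow> beta_inf X (LLam (LVar 0))"
  by (rule infred.intros, rule infind.inf_lam, assumption, rule infind.inf_var, rule rtranclp.rtrancl_refl)

lemma hnf_solvable: "solvable (lams a (apps (LVar z) Ps))"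
proof -
  define k where "k = length Ps"
  define Kk where "Kk = lams (Suc k) (LVar 0)"
  define m where "m = Suc z"
  obtain Ps' where Ps': "length Ps' = k"
    "beta\<^sup>*\<^sup>* (apps (lams (m + a) (apps (LVar z) Ps)) (replicate (m + a) Kk)) (apps Kk Ps')"
    using K_heads[of Ps k "LVar z" "m + a"] unfolding k_def Kk_def m_def by auto
  have "beta\<^sup>*\<^sup>* (apps Kk Ps') (LLam (LVar 0))" using K_red Ps'(1) unfolding Kk_def by blast
  then have "beta_inf (apps (lams m (lams a (apps (LVar z) Ps))) (replicate (m + a) Kk)) (LLam (LVar 0))"
    using Ps'(2) by (intro infred_of_star) (simp add: lams_add)
  moreover have "T001 Kk" unfolding Kk_def by (rule T001_lams[OF T001_var])
  then have "\<forall>N\<in>set (replicate (m + a) Kk). T001 N" by simp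
  ultimately show ?thesis unfolding solvable_def by blast
qed

lemma infred_prepend: "R X Y \<Longrightarrow> infred R Y Z \<Longrightarrow> infred R X Z"
proof -
  assume r: "R X Y" and "infred R Y Z"
  then have "infind R (infred R) Y Z" by (auto elim: infred.cases)
  then have "infind R (infred R) X Z"
    by (cases rule: infind.cases) (auto intro: infind.intros converse_rtranclp_into_rtranclp[of R X Y, OF r])
  then show ?thesis by (rule infred.intros)
qed

lemma solvable_back: "beta M M' \<Longrightarrow> solvable M' \<Longrightarrow> solvable M"
  unfolding solvable_def by (meson beta_apps beta_lams infred_prepend)

lemma unsolvable_zero: "approx s M \<Longrightarrow> \<not> solvable M \<Longrightarrow> rsum_star {s} {}"
proof (induction "rsz s" arbitrary: s M rule: less_induct)
  case less
  show ?case
  proof (cases "rhnf s")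
    case True
    then show ?thesis using hnf_shape[OF less.prems(1)] hnf_solvable less.prems(2) by auto
  next
    case False
    then obtain T M' where h: "rred s T" "beta M M'" "\<forall>u\<in>T. approx u M'" using head_redex less.prems(1) by blast
    have "\<not> solvable M'" using solvable_back h(2) less.prems(2) by blast
    then have "\<forall>u\<in>T. rsum_star {u} {}" using less.hyps rred_size[OF h(1)] h(3) by blast
    then have "rsum_star T (\<Union>u\<in>T. {})" using rsum_par[OF rred_finite[OF h(1)], of "\<lambda>_. {}"] by auto
    then show ?thesis using rsum_one[OF h(1)] by (simp add: converse_rtranclp_into_rtranclp)
  qed
qed

inductive_simps approx_LLam[simp]: "approx s (LLam M)"
inductive_simps approx_LApp[simp]: "approx s (LApp M N)"
inductive_simps approx_LVar[simp]: "approx s (LVar n)"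

lemma sub_conv: "(\<forall>u\<in>T. approx u N) = (T \<subseteq> {u. approx u N})" by auto

lemma combos_approx:
  assumes "approx h M1" "\<forall>T\<in>set Ts. \<forall>u\<in>T. approx u N'" "u \<in> combos h {#} Ts"
  shows "approx u (LApp M1 N')"
proof -
  obtain us where us: "u = RApp h (mset us)" "length us = length Ts" "\<forall>i<length Ts. us ! i \<in> Ts ! i"
    using assms(3) unfolding combos_def by auto
  have "\<forall>x\<in>set us. approx x N'"
  proof
    fix x assume "x \<in> set us"
    then obtain i where "i < length us" "x = us ! i" by (auto simp: in_set_conv_nth)
    then show "approx x N'" using us assms(2) by (metis nth_mem)
  qed
  then show ?thesis using us assms(1) by simp
qed

lemma bag_choose:
  assumes "\<forall>x\<in>#bag. \<exists>T. finite T \<and> rsum_star {x} T \<and> (\<forall>u\<in>T. approx u N')"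
  shows "\<exists>Ts. finite (combos h {#} Ts) \<and> rsum_star {RApp h bag} (combos h {#} Ts) \<and> (\<forall>T\<in>set Ts. \<forall>u\<in>T. approx u N')"
proof -
  obtain xs where xs: "mset xs = bag" using ex_mset by blast
  have "\<forall>i<length xs. \<exists>T. finite T \<and> rsum_star {xs ! i} T \<and> (\<forall>u\<in>T. approx u N')"
    using assms xs by (metis nth_mem_mset)
  then obtain Tf where Tf: "\<forall>i<length xs. finite (Tf i) \<and> rsum_star {xs ! i} (Tf i) \<and> (\<forall>u\<in>Tf i. approx u N')"
    by metis
  define Ts where "Ts = map Tf [0..<length xs]"
  have "rsum_star {RApp h ({#} + mset xs)} (combos h {#} Ts)"
    by (rule rsum_bag) (use Tf in \<open>auto simp: Ts_def\<close>)
  moreover have "finite (combos h {#} Ts)" using Tf by (intro combos_finite) (auto simp: Ts_def)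
  moreover have "\<forall>T\<in>set Ts. \<forall>u\<in>T. approx u N'" using Tf by (auto simp: Ts_def)
  ultimately show ?thesis using xs by auto
qed

lemma bag_step:
  assumes "approx h M1" "\<forall>x\<in>#bag. \<exists>T. finite T \<and> rsum_star {x} T \<and> (\<forall>u\<in>T. approx u N')"
  shows "\<exists>T. finite T \<and> rsum_star {RApp h bag} T \<and> (\<forall>u\<in>T. approx u (LApp M1 N'))"
  using bag_choose[OF assms(2), of h] combos_approx[OF assms(1)] by blast

lemma bag_surj:
  assumes "\<forall>y\<in>#bag. \<exists>s T. approx s Q \<and> finite T \<and> rsum_star {s} T \<and> (\<forall>u\<in>T. approx u Q') \<and> y \<in> T"
  shows "\<exists>bag0 Ts. (\<forall>x\<in>#bag0. approx x Q) \<and> (\<forall>h. rsum_star {RApp h bag0} (combos h {#} Ts) \<and>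
     RApp h bag \<in> combos h {#} Ts \<and> finite (combos h {#} Ts)) \<and> (\<forall>T\<in>set Ts. \<forall>u\<in>T. approx u Q')"
proof -
  obtain xs where xs: "mset xs = bag" using ex_mset by blast
  have "\<forall>i<length xs. \<exists>s T. approx s Q \<and> finite T \<and> rsum_star {s} T \<and> (\<forall>u\<in>T. approx u Q') \<and> xs ! i \<in> T"
    using assms xs by (metis nth_mem_mset)
  then obtain sf Tf where Tf: "\<forall>i<length xs. approx (sf i) Q \<and> finite (Tf i) \<and> rsum_star {sf i} (Tf i) \<and> (\<forall>u\<in>Tf i. approx u Q') \<and> xs ! i \<in> Tf i"
    by metis
  define Ts where "Ts = map Tf [0..<length xs]"
  define ss where "ss = map sf [0..<length xs]"
  have "rsum_star {RApp h ({#} + mset ss)} (combos h {#} Ts)" for h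
    by (rule rsum_bag) (use Tf in \<open>auto simp: Ts_def ss_def\<close>)
  moreover have "finite (combos h {#} Ts)" for h using Tf by (intro combos_finite) (auto simp: Ts_def)
  moreover have "RApp h bag \<in> combos h {#} Ts" for h
    unfolding combos_def using xs Tf by (intro CollectI exI[of _ xs]) (auto simp: Ts_def)
  moreover have "\<forall>T\<in>set Ts. \<forall>u\<in>T. approx u Q'" using Tf by (auto simp: Ts_def)
  moreover have "\<forall>x\<in>#mset ss. approx x Q" using Tf by (auto simp: ss_def)
  ultimately show ?thesis by (intro exI[of _ "mset ss"] exI[of _ Ts]) auto
qed

lemma os: "betabot M M' \<Longrightarrow> approx s M \<Longrightarrow> \<exists>T. finite T \<and> rsum_star {s} T \<and> (\<forall>u\<in>T. approx u M')"
proof (induction arbitrary: s rule: betabot.induct)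
  case (bb_redex M N)
  then obtain s1 ts where s: "s = RApp (RLam s1) ts" "approx s1 M" "\<forall>t\<in>#ts. approx t N" by auto
  have r: "rred s (linsubst s1 ts)" unfolding s by (rule rred.r_redex)
  have "\<forall>u\<in>linsubst s1 ts. approx u (subst 0 N M)"
    using s approx_subst unfolding linsubst_def by blast
  moreover have "rsum_star {s} (linsubst s1 ts)" using rsum_one[OF r] by (rule r_into_rtranclp)
  moreover have "finite (linsubst s1 ts)" by (rule rred_finite[OF r])
  ultimately show ?case by blast
next
  case (bb_bot M M')
  from bb_bot.hyps show ?case
  proof (cases rule: bot0.cases)
    case (bot_unsolv)
    have "\<not> solvable M" using bot_unsolv by blast
    then have r0: "rsum_star {s} {}" by (rule unsolvable_zero[OF bb_bot.prems])
    show ?thesis by (rule exI[of _ "{}"]) (simp add: r0)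
  next
    case bot_lam
    then show ?thesis using bb_bot.prems by simp
  next
    case (bot_app N)
    then show ?thesis using bb_bot.prems by simp
  qed
next
  case (bb_lam M M')
  then obtain s' where s: "s = RLam s'" "approx s' M" by auto
  then obtain T where T: "finite T" "rsum_star {s'} T" "\<forall>u\<in>T. approx u M'" using bb_lam.IH by blast
  have "rsum_star (RLam ` {s'}) (RLam ` T)" by (rule rsum_context[OF rred.r_lam T(2)])
  then show ?case using T s by (intro exI[of _ "RLam ` T"]) auto
next
  case (bb_appl M M' N)
  then obtain s' ts where s: "s = RApp s' ts" "approx s' M" "\<forall>t\<in>#ts. approx t N" by auto
  then obtain T where T: "finite T" "rsum_star {s'} T" "\<forall>u\<in>T. approx u M'" using bb_appl.IH by blast
  have "rsum_star ((\<lambda>x. RApp x ts) ` {s'}) ((\<lambda>x. RApp x ts) ` T)" by (rule rsum_context[OF rred.r_head T(2)])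
  then show ?case using T s by (intro exI[of _ "(\<lambda>x. RApp x ts) ` T"]) auto
next
  case (bb_appr N N' M)
  then obtain s1 bag where s: "s = RApp s1 bag" "approx s1 M" "\<forall>t\<in>#bag. approx t N" by auto
  have "\<forall>x\<in>#bag. \<exists>T. finite T \<and> rsum_star {x} T \<and> (\<forall>u\<in>T. approx u N')"
    using bb_appr.IH s(3) by blast
  from bag_step[OF s(2) this] show ?case unfolding s(1) .
qed

lemma os_surj: "betabot M M' \<Longrightarrow> approx t M' \<Longrightarrow>
  \<exists>s T. approx s M \<and> finite T \<and> rsum_star {s} T \<and> (\<forall>u\<in>T. approx u M') \<and> t \<in> T"
proof (induction arbitrary: t rule: betabot.induct)
  case (bb_redex M N)
  then obtain s1 ts where h: "approx s1 M" "\<forall>x\<in>#ts. approx x N" "lsub 0 ts s1 t"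
    using approx_subst_inv by blast
  have r: "rred (RApp (RLam s1) ts) (linsubst s1 ts)" by (rule rred.r_redex)
  have "\<forall>u\<in>linsubst s1 ts. approx u (subst 0 N M)"
    using h approx_subst unfolding linsubst_def by blast
  moreover have "t \<in> linsubst s1 ts" using h(3) unfolding linsubst_def by simp
  moreover have "approx (RApp (RLam s1) ts) (LApp (LLam M) N)" using h by simp
  moreover have "rsum_star {RApp (RLam s1) ts} (linsubst s1 ts)" using rsum_one[OF r] by (rule r_into_rtranclp)
  moreover have "finite (linsubst s1 ts)" by (rule rred_finite[OF r])
  ultimately show ?case by blast
next
  case (bb_bot M M')
  from bb_bot.hyps have "M' = LBot" by (cases rule: bot0.cases) auto
  then show ?case using bb_bot.prems by simp
next
  case (bb_lam M M')
  then obtain t' where t: "t = RLam t'" "approx t' M'" by auto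
  then obtain s T where T: "approx s M" "finite T" "rsum_star {s} T" "\<forall>u\<in>T. approx u M'" "t' \<in> T" using bb_lam.IH by blast
  have "rsum_star (RLam ` {s}) (RLam ` T)" by (rule rsum_context[OF rred.r_lam T(3)])
  then show ?case using T t by (intro exI[of _ "RLam s"] exI[of _ "RLam ` T"]) auto
next
  case (bb_appl M M' N)
  then obtain t' ts where t: "t = RApp t' ts" "approx t' M'" "\<forall>x\<in>#ts. approx x N" by auto
  then obtain s T where T: "approx s M" "finite T" "rsum_star {s} T" "\<forall>u\<in>T. approx u M'" "t' \<in> T" using bb_appl.IH by blast
  have "rsum_star ((\<lambda>x. RApp x ts) ` {s}) ((\<lambda>x. RApp x ts) ` T)" by (rule rsum_context[OF rred.r_head T(3)])
  then show ?case using T t by (intro exI[of _ "RApp s ts"] exI[of _ "(\<lambda>x. RApp x ts) ` T"]) auto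
next
  case (bb_appr N N' M)
  then obtain t1 bag where t: "t = RApp t1 bag" "approx t1 M" "\<forall>x\<in>#bag. approx x N'" by auto
  obtain bag0 Ts where b: "\<forall>x\<in>#bag0. approx x N" "\<forall>h. rsum_star {RApp h bag0} (combos h {#} Ts) \<and>
     RApp h bag \<in> combos h {#} Ts \<and> finite (combos h {#} Ts)" "\<forall>T\<in>set Ts. \<forall>u\<in>T. approx u N'"
    using bag_surj[of bag N N'] bb_appr.IH t(3) by blast
  show ?case using b t combos_approx[OF t(2) b(3)]
    by (intro exI[of _ "RApp t1 bag0"] exI[of _ "combos t1 {#} Ts"]) auto
qed

lemma conv_ex: "\<exists>T. finite T \<and> rsum_star {x} T \<and> (\<forall>u\<in>T. approx u N) \<Longrightarrow>
  \<exists>T. finite T \<and> rsum_star {x} T \<and> T \<subseteq> {u. approx u N}"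
  by (elim exE, rule_tac x=T in exI) auto

lemma fs: "betabot\<^sup>*\<^sup>* M M' \<Longrightarrow> approx s M \<Longrightarrow> \<exists>T. finite T \<and> rsum_star {s} T \<and> (\<forall>u\<in>T. approx u M')"
proof (induction rule: rtranclp_induct)
  case base
  have "rsum_star {s} {s}" by simp
  then show ?case using base by (intro exI[of _ "{s}"]) auto
next
  case (step M1 M2)
  then obtain A where A: "finite A" "rsum_star {s} A" "\<forall>u\<in>A. approx u M1" by blast
  have "\<exists>T. finite T \<and> rsum_star {s} T \<and> T \<subseteq> {u. approx u M2}"
  proof (rule rsum_seq[OF A(2,1)])
    fix x assume "x \<in> A"
    then have "approx x M1" using A(3) by blast
    then show "\<exists>T. finite T \<and> rsum_star {x} T \<and> T \<subseteq> {u. approx u M2}"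
      by (rule conv_ex[OF os[OF step(2)]])
  qed
  then obtain T where "finite T" "rsum_star {s} T" "T \<subseteq> {u. approx u M2}" by blast
  then show ?case by blast
qed

lemma fs_surj: "betabot\<^sup>*\<^sup>* M M' \<Longrightarrow> approx t M' \<Longrightarrow>
  \<exists>s T. approx s M \<and> finite T \<and> rsum_star {s} T \<and> (\<forall>u\<in>T. approx u M') \<and> t \<in> T"
proof (induction arbitrary: t rule: rtranclp_induct)
  case base
  have "rsum_star {t} {t}" by simp
  then show ?case using base by blast
next
  case (step M1 M2)
  obtain s1 T1 where T1: "approx s1 M1" "finite T1" "rsum_star {s1} T1" "\<forall>u\<in>T1. approx u M2" "t \<in> T1"
    using os_surj[OF step(2) step.prems] by blast
  obtain s A where A: "approx s M" "finite A" "rsum_star {s} A" "\<forall>u\<in>A. approx u M1" "s1 \<in> A"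
    using step.IH[OF T1(1)] by blast
  have "\<exists>T. finite T \<and> rsum_star {s} T \<and> T \<subseteq> {u. approx u M2} \<and> t \<in> T"
  proof (rule rsum_comb[OF A(3,2) _ A(5) T1(3,2,5), of "{u. approx u M1}"])
    show "A \<subseteq> {u. approx u M1}" using A(4) by blast
    show "T1 \<subseteq> {u. approx u M2}" using T1(4) by blast
    fix x assume "x \<in> {u. approx u M1}"
    then have "approx x M1" by simp
    then show "\<exists>T. finite T \<and> rsum_star {x} T \<and> T \<subseteq> {u. approx u M2}"
      by (rule conv_ex[OF os[OF step(2)]])
  qed
  then obtain T where "finite T" "rsum_star {s} T" "T \<subseteq> {u. approx u M2}" "t \<in> T" by blast
  then show ?case using A(1) by blast
qed

lemma rsz_bag: "y \<in># bag \<Longrightarrow> rsz y < rsz (RApp x bag)"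
proof -
  assume "y \<in># bag"
  then obtain rest where "bag = add_mset y rest" by (meson multi_member_split)
  then show ?thesis by simp
qed

lemma infred_unfold: "infred R M N \<Longrightarrow> infind R (infred R) M N"
  by (auto elim: infred.cases)

lemma infind_infred: "infind R (infred R) P P' \<Longrightarrow> infred R P P'"
  by (rule infred.intros)

lemma is_sound: "infred betabot M N \<Longrightarrow> approx s M \<Longrightarrow> \<exists>T. finite T \<and> rsum_star {s} T \<and> (\<forall>u\<in>T. approx u N)"
proof (induction "rsz s" arbitrary: s M N rule: less_induct)
  case less
  from infred_unfold[OF less.prems(1)] show ?case
  proof (cases rule: infind.cases)
    case (inf_var x)
    then show ?thesis using fs less.prems(2) by blast
  next
    case inf_bot
    then show ?thesis using fs less.prems(2) by blast
  next
    case (inf_lam P P')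
    obtain A where A: "finite A" "rsum_star {s} A" "\<forall>u\<in>A. approx u (LLam P)" using fs[OF inf_lam(2) less.prems(2)] by blast
    have "\<exists>T. finite T \<and> rsum_star {s} T \<and> T \<subseteq> {u. approx u N}"
    proof (rule rsum_seq[OF A(2,1)])
      fix x assume x: "x \<in> A"
      then obtain x' where x': "x = RLam x'" "approx x' P" using A(3) by auto
      have "rsz x \<le> rsz s" using rsum_size[OF A(2) x] by auto
      then have "rsz x' < rsz s" using x' by simp
      then obtain T' where T': "finite T'" "rsum_star {x'} T'" "\<forall>u\<in>T'. approx u P'"
        using less.hyps x'(2) infind_infred[OF inf_lam(3)] by blast
      have "rsum_star (RLam ` {x'}) (RLam ` T')" by (rule rsum_context[OF rred.r_lam T'(2)])
      then show "\<exists>T. finite T \<and> rsum_star {x} T \<and> T \<subseteq> {u. approx u N}"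
        using T' x' inf_lam(1) by (intro exI[of _ "RLam ` T'"]) auto
    qed
    then show ?thesis by auto
  next
    case (inf_app P Q P' Q')
    obtain A where A: "finite A" "rsum_star {s} A" "\<forall>u\<in>A. approx u (LApp P Q)" using fs[OF inf_app(2) less.prems(2)] by blast
    have "\<exists>T. finite T \<and> rsum_star {s} T \<and> T \<subseteq> {u. approx u N}"
    proof (rule rsum_seq[OF A(2,1)])
      fix x assume x: "x \<in> A"
      then obtain x1 bag where x': "x = RApp x1 bag" "approx x1 P" "\<forall>y\<in>#bag. approx y Q" using A(3) by auto
      have "rsz x \<le> rsz s" using rsum_size[OF A(2) x] by auto
      have "\<forall>y\<in>#bag. rsz y < rsz x" using x' rsz_bag by blast
      then have sz2: "\<forall>y\<in>#bag. rsz y < rsz s" using \<open>rsz x \<le> rsz s\<close> by (meson order_less_le_trans)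
      have sz1: "rsz x1 < rsz s" using x' \<open>rsz x \<le> rsz s\<close> by simp
      obtain T1 where T1: "finite T1" "rsum_star {x1} T1" "\<forall>u\<in>T1. approx u P'"
        using less.hyps[OF sz1] x'(2) infind_infred[OF inf_app(3)] by blast
      have c1: "rsum_star ((\<lambda>v. RApp v bag) ` {x1}) ((\<lambda>v. RApp v bag) ` T1)" by (rule rsum_context[OF rred.r_head T1(2)])
      have bg: "\<forall>y\<in>#bag. \<exists>T. finite T \<and> rsum_star {y} T \<and> (\<forall>u\<in>T. approx u Q')"
        using less.hyps sz2 x'(3) inf_app(4) by blast
      have "\<exists>T. finite T \<and> rsum_star {x} T \<and> T \<subseteq> {u. approx u (LApp P' Q')}"
      proof (rule rsum_seq[of x "(\<lambda>v. RApp v bag) ` T1"])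
        show "rsum_star {x} ((\<lambda>v. RApp v bag) ` T1)" using c1 x' by simp
        show "finite ((\<lambda>v. RApp v bag) ` T1)" using T1 by simp
        fix z assume "z \<in> (\<lambda>v. RApp v bag) ` T1"
        then obtain v where v: "z = RApp v bag" "approx v P'" using T1 by auto
        show "\<exists>T. finite T \<and> rsum_star {z} T \<and> T \<subseteq> {u. approx u (LApp P' Q')}"
          unfolding v(1) by (rule conv_ex[OF bag_step[OF v(2) bg]])
      qed
      then show "\<exists>T. finite T \<and> rsum_star {x} T \<and> T \<subseteq> {u. approx u N}" using inf_app(1) by simp
    qed
    then show ?thesis by auto
  qed
qed

lemma is_surj: "infred betabot M N \<Longrightarrow> approx t N \<Longrightarrow>
  \<exists>s T. approx s M \<and> finite T \<and> rsum_star {s} T \<and> (\<forall>u\<in>T. approx u N) \<and> t \<in> T"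
proof (induction "rsz t" arbitrary: t M N rule: less_induct)
  case less
  from infred_unfold[OF less.prems(1)] show ?case
  proof (cases rule: infind.cases)
    case (inf_var x)
    then show ?thesis using fs_surj less.prems(2) by blast
  next
    case inf_bot
    then show ?thesis using less.prems(2) by simp
  next
    case (inf_lam P P')
    then obtain t' where t: "t = RLam t'" "approx t' P'" using less.prems(2) by auto
    have szt: "rsz t' < rsz t" using t by simp
    obtain s' T' where T': "approx s' P" "finite T'" "rsum_star {s'} T'" "\<forall>u\<in>T'. approx u P'" "t' \<in> T'"
      using less.hyps[OF szt infind_infred[OF inf_lam(3)] t(2)] by blast
    have c: "rsum_star (RLam ` {s'}) (RLam ` T')" by (rule rsum_context[OF rred.r_lam T'(3)])
    obtain s A where A: "approx s M" "finite A" "rsum_star {s} A" "\<forall>u\<in>A. approx u (LLam P)" "RLam s' \<in> A"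
      using fs_surj[OF inf_lam(2), of "RLam s'"] T'(1) by auto
    have inf: "infred betabot (LLam P) (LLam P')"
      by (rule infred.intros, rule infind.inf_lam[OF rtranclp.rtrancl_refl inf_lam(3)])
    have "\<exists>T. finite T \<and> rsum_star {s} T \<and> T \<subseteq> {u. approx u N} \<and> t \<in> T"
    proof (rule rsum_comb[OF A(3,2) _ A(5), of "{u. approx u (LLam P)}" "RLam ` T'"])
      show "A \<subseteq> {u. approx u (LLam P)}" using A(4) by blast
      show "rsum_star {RLam s'} (RLam ` T')" using c by simp
      show "finite (RLam ` T')" using T'(2) by simp
      show "t \<in> RLam ` T'" using t(1) T'(5) by simp
      show "RLam ` T' \<subseteq> {u. approx u N}" using T'(4) inf_lam(1) by auto
      fix x assume "x \<in> {u. approx u (LLam P)}"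
      then have "approx x (LLam P)" by simp
      then show "\<exists>T. finite T \<and> rsum_star {x} T \<and> T \<subseteq> {u. approx u N}"
        unfolding inf_lam(1) by (rule conv_ex[OF is_sound[OF inf]])
    qed
    then obtain T where "finite T" "rsum_star {s} T" "T \<subseteq> {u. approx u N}" "t \<in> T" by blast
    then show ?thesis using A(1) by blast
  next
    case (inf_app P Q P' Q')
    then obtain t1 bag where t: "t = RApp t1 bag" "approx t1 P'" "\<forall>y\<in>#bag. approx y Q'" using less.prems(2) by auto
    have sz1: "rsz t1 < rsz t" and sz2: "\<forall>y\<in>#bag. rsz y < rsz t" using t rsz_bag[of _ bag t1] by auto
    obtain s1 T1 where T1: "approx s1 P" "finite T1" "rsum_star {s1} T1" "\<forall>u\<in>T1. approx u P'" "t1 \<in> T1"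
      using less.hyps[OF sz1] t(2) infind_infred[OF inf_app(3)] by blast
    have "\<forall>y\<in>#bag. \<exists>s T. approx s Q \<and> finite T \<and> rsum_star {s} T \<and> (\<forall>u\<in>T. approx u Q') \<and> y \<in> T"
      using less.hyps sz2 t(3) inf_app(4) by blast
    then obtain bag0 Ts where b: "\<forall>x\<in>#bag0. approx x Q" "\<forall>h. rsum_star {RApp h bag0} (combos h {#} Ts) \<and>
       RApp h bag \<in> combos h {#} Ts \<and> finite (combos h {#} Ts)" "\<forall>T\<in>set Ts. \<forall>u\<in>T. approx u Q'"
      using bag_surj[of bag Q Q'] by blast
    have c1: "rsum_star ((\<lambda>v. RApp v bag0) ` {s1}) ((\<lambda>v. RApp v bag0) ` T1)" by (rule rsum_context[OF rred.r_head T1(3)])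
    have isQ: "\<forall>x\<in>#bag0. \<exists>T. finite T \<and> rsum_star {x} T \<and> (\<forall>u\<in>T. approx u Q')"
      using is_sound[OF inf_app(4)] b(1) by blast
    have "\<exists>T. finite T \<and> rsum_star {RApp s1 bag0} T \<and> T \<subseteq> {u. approx u (LApp P' Q')} \<and> t \<in> T"
    proof (rule rsum_comb[of _ "(\<lambda>v. RApp v bag0) ` T1" "{RApp v bag0 | v. approx v P'}" "RApp t1 bag0" "combos t1 {#} Ts"])
      show "rsum_star {RApp s1 bag0} ((\<lambda>v. RApp v bag0) ` T1)" using c1 by simp
      show "finite ((\<lambda>v. RApp v bag0) ` T1)" using T1 by simp
      show "(\<lambda>v. RApp v bag0) ` T1 \<subseteq> {RApp v bag0 | v. approx v P'}" using T1 by auto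
      show "RApp t1 bag0 \<in> (\<lambda>v. RApp v bag0) ` T1" using T1 by auto
      show "rsum_star {RApp t1 bag0} (combos t1 {#} Ts)" "finite (combos t1 {#} Ts)" "t \<in> combos t1 {#} Ts"
        using b(2) t by auto
      show "combos t1 {#} Ts \<subseteq> {u. approx u (LApp P' Q')}" using combos_approx[OF t(2) b(3)] by auto
      fix x assume "x \<in> {RApp v bag0 | v. approx v P'}"
      then obtain v where v: "x = RApp v bag0" "approx v P'" by auto
      show "\<exists>T. finite T \<and> rsum_star {x} T \<and> T \<subseteq> {u. approx u (LApp P' Q')}"
        unfolding v(1) by (rule conv_ex[OF bag_step[OF v(2) isQ]])
    qed
    then obtain Ta where Ta: "finite Ta" "rsum_star {RApp s1 bag0} Ta" "Ta \<subseteq> {u. approx u (LApp P' Q')}" "t \<in> Ta"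
      by blast
    obtain s A where A: "approx s M" "finite A" "rsum_star {s} A" "\<forall>u\<in>A. approx u (LApp P Q)" "RApp s1 bag0 \<in> A"
      using fs_surj[OF inf_app(2), of "RApp s1 bag0"] T1(1) b(1) by auto
    have inf: "infred betabot (LApp P Q) (LApp P' Q')"
      by (rule infred.intros, rule infind.inf_app[OF rtranclp.rtrancl_refl inf_app(3,4)])
    have "\<exists>T. finite T \<and> rsum_star {s} T \<and> T \<subseteq> {u. approx u N} \<and> t \<in> T"
    proof (rule rsum_comb[OF A(3,2) _ A(5) Ta(2,1,4), of "{u. approx u (LApp P Q)}"])
      show "A \<subseteq> {u. approx u (LApp P Q)}" using A(4) by blast
      show "Ta \<subseteq> {u. approx u N}" using Ta(3) inf_app(1) by simp
      fix x assume "x \<in> {u. approx u (LApp P Q)}"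
      then have "approx x (LApp P Q)" by simp
      then show "\<exists>T. finite T \<and> rsum_star {x} T \<and> T \<subseteq> {u. approx u N}"
        unfolding inf_app(1) by (rule conv_ex[OF is_sound[OF inf]])
    qed
    then obtain T where "finite T" "rsum_star {s} T" "T \<subseteq> {u. approx u N}" "t \<in> T" by blast
    then show ?thesis using A(1) by blast
  qed
qed

theorem mainTheorem12:
  assumes "T001 M" and "T001 N" and "betabot_inf M N"
  shows "rtilde (taylor M) (taylor N)"
proof -
  define P where "P = {(s, T). approx s M \<and> finite T \<and> rsum_star {s} T \<and> (\<forall>u\<in>T. approx u N)}"
  have "taylor M = fst ` P"
  proof
    show "taylor M \<subseteq> fst ` P"
    proof
      fix s assume "s \<in> taylor M"
      then have "approx s M" by (simp add: taylor_def)
      then obtain T where "finite T" "rsum_star {s} T" "\<forall>u\<in>T. approx u N" using is_sound[OF assms(3)] by blast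
      then have "(s, T) \<in> P" using \<open>approx s M\<close> by (simp add: P_def)
      then show "s \<in> fst ` P" by force
    qed
    show "fst ` P \<subseteq> taylor M" by (auto simp: P_def taylor_def)
  qed
  moreover have "taylor N = \<Union>(snd ` P)"
  proof
    show "taylor N \<subseteq> \<Union>(snd ` P)"
    proof
      fix t assume "t \<in> taylor N"
      then have "approx t N" by (simp add: taylor_def)
      then obtain s T where "approx s M" "finite T" "rsum_star {s} T" "\<forall>u\<in>T. approx u N" "t \<in> T"
        using is_surj[OF assms(3)] by blast
      then have "(s, T) \<in> P" by (simp add: P_def)
      then show "t \<in> \<Union>(snd ` P)" using \<open>t \<in> T\<close> by force
    qed
    show "\<Union>(snd ` P) \<subseteq> taylor N" by (auto simp: P_def taylor_def)
  qed
  moreover have "\<forall>(s, T)\<in>P. finite T \<and> rsum_star {s} T" by (auto simp: P_def)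
  ultimately show ?thesis unfolding rtilde_def by blast
qed

end
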